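(* Let $m\geq1$ be an odd integer and $n>1$ an integer such that $\mathcal{A}_{m,n}:=m2^n-1$ is prime. Let $t\in\mathbb{F}_{\mathcal{A}_{m,n}}$ be such that $t^2+1$ is not a square in $\mathbb{F}_{\mathcal{A}_{m,n}}$, and let $E_t/\mathbb{F}_{\mathcal{A}_{m,n}}$ be the elliptic curve $y^2=x^3-(t^2+1)x$. Then the point $m\cdot(-1,t)$ generates the $2$-Sylow subgroup of $E_t(\mathbb{F}_{\mathcal{A}_{m,n}})$. *)

theory Defs
  imports Main "HOL-Computational_Algebra.Primes" "HOL-Library.Cardinality"
begin

datatype 'a ecpoint = Infty | Aff 'a 'a

definition on_curve :: "'a::field \<Rightarrow> 'a \<Rightarrow> 'a ecpoint \<Rightarrow> bool" where
  "on_curve a b P = (case P of Infty \<Rightarrow> True | Aff x y \<Rightarrow> y^2 = x^3 + a*x + b)"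

definition curve_points :: "'a::field \<Rightarrow> 'a \<Rightarrow> 'a ecpoint set" where
  "curve_points a b = {P. on_curve a b P}"

text \<open>The standard chord-tangent group law (characteristic not 2).\<close>
fun ec_add :: "'a::field \<Rightarrow> 'a ecpoint \<Rightarrow> 'a ecpoint \<Rightarrow> 'a ecpoint" where
  "ec_add a Infty Q = Q"
| "ec_add a (Aff x1 y1) Infty = Aff x1 y1"
| "ec_add a (Aff x1 y1) (Aff x2 y2) =
     (if x1 = x2 then
        (if y1 = - y2 then Infty
         else (let l = (3 * x1^2 + a) / (2 * y1); x3 = l^2 - 2 * x1
               in Aff x3 (l * (x1 - x3) - y1)))
      else (let l = (y2 - y1) / (x2 - x1); x3 = l^2 - x1 - x2
            in Aff x3 (l * (x1 - x3) - y1)))"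

fun ec_smult :: "'a::field \<Rightarrow> nat \<Rightarrow> 'a ecpoint \<Rightarrow> 'a ecpoint" where
  "ec_smult a 0 P = Infty"
| "ec_smult a (Suc k) P = ec_add a P (ec_smult a k P)"

definition two_sylow :: "'a::field \<Rightarrow> 'a \<Rightarrow> 'a ecpoint set" where
  "two_sylow a b = {P \<in> curve_points a b. \<exists>e. ec_smult a (2^e) P = Infty}"

text \<open>Cyclic subgroup generated by a point (finite group, so nonnegative multiples suffice).\<close>
definition ec_cyclic :: "'a::field \<Rightarrow> 'a ecpoint \<Rightarrow> 'a ecpoint set" where
  "ec_cyclic a P = range (\<lambda>k. ec_smult a k P)"

end

theory Submission
  imports Defs "HOL-Algebra.Multiplicative_Group"
begin

definition edx :: "'a::field \<Rightarrow> 'a \<Rightarrow> 'a \<Rightarrow> 'a \<Rightarrow> 'a" where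
  "edx x1 y1 x2 y2 = (x1*y2+y1*x2)/(1 - x1*x2*y1*y2)"
definition edy :: "'a::field \<Rightarrow> 'a \<Rightarrow> 'a \<Rightarrow> 'a \<Rightarrow> 'a" where
  "edy x1 y1 x2 y2 = (y1*y2-x1*x2)/(1 + x1*x2*y1*y2)"

lemma ed_complete:
  fixes x1 y1 x2 y2 :: "'a::field"
  assumes m1: "\<not> (\<exists>z::'a. z^2 = -1)"
    and e1: "x1^2+y1^2+x1^2*y1^2 = 1" and e2: "x2^2+y2^2+x2^2*y2^2 = 1"
  shows "1 - x1*x2*y1*y2 \<noteq> 0 \<and> 1 + x1*x2*y1*y2 \<noteq> 0"
proof -
  have key: False if eps: "eps^2 = 1" and u: "x1*x2*y1*y2 = eps" for eps
  proof -
    have nz: "x1*y1 \<noteq> 0" using u eps by auto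
    have h1: "(-1)*(x1*y1*(x2+y2))^2 = (x1 - eps*y1)^2"
      using e1 e2 u eps by Groebner_Basis.algebra
    have h2: "(-1)*(x1*y1*(x2-y2))^2 = (x1 + eps*y1)^2"
      using e1 e2 u eps by Groebner_Basis.algebra
    show False
    proof (cases "x2+y2 = 0")
      case False
      have q: "(x1*y1*(x2+y2))^2 \<noteq> 0" using False nz by simp
      have "((x1 - eps*y1)/(x1*y1*(x2+y2)))^2 = ((-1)*(x1*y1*(x2+y2))^2)/(x1*y1*(x2+y2))^2"
        by (simp only: power_divide h1)
      also have "\<dots> = -1" using q by simp
      finally have "((x1 - eps*y1)/(x1*y1*(x2+y2)))^2 = -1" .
      then show False using m1 by blast
    next
      case True
      have two: "(2::'a) \<noteq> 0"
      proof
        assume "(2::'a) = 0"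
        then have "(1::'a)^2 = -1" by (simp add: eq_neg_iff_add_eq_0 one_add_one)
        then show False using m1 by blast
      qed
      have "x2 - y2 \<noteq> 0"
      proof
        assume "x2 - y2 = 0"
        then have "2 * y2 = 0" using True by (simp add: algebra_simps)
        then have "y2 = 0" using two by simp
        then show False using u eps by auto
      qed
      then have q: "(x1*y1*(x2-y2))^2 \<noteq> 0" using nz by simp
      have "((x1 + eps*y1)/(x1*y1*(x2-y2)))^2 = ((-1)*(x1*y1*(x2-y2))^2)/(x1*y1*(x2-y2))^2"
        by (simp only: power_divide h2)
      also have "\<dots> = -1" using q by simp
      finally have "((x1 + eps*y1)/(x1*y1*(x2-y2)))^2 = -1" .
      then show False using m1 by blast
    qed
  qed
  show ?thesis
  proof
    show "1 - x1*x2*y1*y2 \<noteq> 0" using key[of 1] by auto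
    show "1 + x1*x2*y1*y2 \<noteq> 0" using key[of "-1"] by (auto simp: algebra_simps eq_neg_iff_add_eq_0)
  qed
qed

lemma ed_closed:
  fixes x1 y1 x2 y2 :: "'a::field"
  assumes "x1^2+y1^2+x1^2*y1^2 = 1" "x2^2+y2^2+x2^2*y2^2 = 1"
    and "1 - x1*x2*y1*y2 \<noteq> 0" "1 + x1*x2*y1*y2 \<noteq> 0"
  shows "(edx x1 y1 x2 y2)^2 + (edy x1 y1 x2 y2)^2 + (edx x1 y1 x2 y2)^2 * (edy x1 y1 x2 y2)^2 = 1"
  using assms unfolding edx_def edy_def
  apply (simp add: power_divide field_simps)
  by Groebner_Basis.algebra

lemma ed_assoc:
  fixes x1 y1 x2 y2 x3 y3 :: "'a::field"
  assumes m1: "\<not> (\<exists>z::'a. z^2 = -1)"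
    and e1: "x1^2+y1^2+x1^2*y1^2 = 1" and e2: "x2^2+y2^2+x2^2*y2^2 = 1"
    and e3: "x3^2+y3^2+x3^2*y3^2 = 1"
  shows "edx (edx x1 y1 x2 y2) (edy x1 y1 x2 y2) x3 y3 = edx x1 y1 (edx x2 y2 x3 y3) (edy x2 y2 x3 y3)
     \<and> edy (edx x1 y1 x2 y2) (edy x1 y1 x2 y2) x3 y3 = edy x1 y1 (edx x2 y2 x3 y3) (edy x2 y2 x3 y3)"
proof -
  define a where "a = x1*y2+y1*x2"
  define b where "b = 1 - x1*x2*y1*y2"
  define c where "c = y1*y2-x1*x2"
  define e where "e = 1 + x1*x2*y1*y2"
  define a' where "a' = x2*y3+y2*x3"
  define b' where "b' = 1 - x2*x3*y2*y3"
  define c' where "c' = y2*y3-x2*x3"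
  define e' where "e' = 1 + x2*x3*y2*y3"
  have b: "b \<noteq> 0" and e: "e \<noteq> 0" using ed_complete[OF m1 e1 e2] by (auto simp: b_def e_def)
  have b': "b' \<noteq> 0" and e': "e' \<noteq> 0" using ed_complete[OF m1 e2 e3] by (auto simp: b'_def e'_def)
  have X12: "edx x1 y1 x2 y2 = a/b" and Y12: "edy x1 y1 x2 y2 = c/e"
    by (simp_all add: edx_def edy_def a_def b_def c_def e_def)
  have X23: "edx x2 y2 x3 y3 = a'/b'" and Y23: "edy x2 y2 x3 y3 = c'/e'"
    by (simp_all add: edx_def edy_def a'_def b'_def c'_def e'_def)
  have c12: "(a/b)^2 + (c/e)^2 + (a/b)^2*(c/e)^2 = 1"
    using ed_closed[OF e1 e2] ed_complete[OF m1 e1 e2] X12 Y12 by simp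
  have c23: "(a'/b')^2 + (c'/e')^2 + (a'/b')^2*(c'/e')^2 = 1"
    using ed_closed[OF e2 e3] ed_complete[OF m1 e2 e3] X23 Y23 by simp
  have d1: "1 - (a/b)*x3*(c/e)*y3 \<noteq> 0 \<and> 1 + (a/b)*x3*(c/e)*y3 \<noteq> 0"
    using ed_complete[OF m1 c12 e3] .
  have d2: "1 - x1*(a'/b')*y1*(c'/e') \<noteq> 0 \<and> 1 + x1*(a'/b')*y1*(c'/e') \<noteq> 0"
    using ed_complete[OF m1 e1 c23] .
  have DL: "b*e - a*c*x3*y3 \<noteq> 0" "b*e + a*c*x3*y3 \<noteq> 0"
    using d1 b e by (auto simp: field_simps)
  have DR: "b'*e' - x1*y1*a'*c' \<noteq> 0" "b'*e' + x1*y1*a'*c' \<noteq> 0"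
    using d2 b' e' by (auto simp: field_simps)
  have L1: "edx (a/b) (c/e) x3 y3 = (a*e*y3 + c*b*x3)/(b*e - a*c*x3*y3)"
    unfolding edx_def using b e DL d1 by (subst frac_eq_eq) (auto simp: field_simps)
  have L2: "edy (a/b) (c/e) x3 y3 = (c*b*y3 - a*e*x3)/(b*e + a*c*x3*y3)"
    unfolding edy_def using b e DL d1 by (subst frac_eq_eq) (auto simp: field_simps)
  have R1: "edx x1 y1 (a'/b') (c'/e') = (x1*c'*b' + y1*a'*e')/(b'*e' - x1*y1*a'*c')"
    unfolding edx_def using b' e' DR d2 by (subst frac_eq_eq) (auto simp: field_simps)
  have R2: "edy x1 y1 (a'/b') (c'/e') = (y1*c'*b' - x1*a'*e')/(b'*e' + x1*y1*a'*c')"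
    unfolding edy_def using b' e' DR d2 by (subst frac_eq_eq) (auto simp: field_simps)
  have E1: "(a*e*y3 + c*b*x3)*(b'*e' - x1*y1*a'*c') = (x1*c'*b' + y1*a'*e')*(b*e - a*c*x3*y3)"
    using e1 e2 e3 unfolding a_def b_def c_def e_def a'_def b'_def c'_def e'_def by Groebner_Basis.algebra
  have E2: "(c*b*y3 - a*e*x3)*(b'*e' + x1*y1*a'*c') = (y1*c'*b' - x1*a'*e')*(b*e + a*c*x3*y3)"
    using e1 e2 e3 unfolding a_def b_def c_def e_def a'_def b'_def c'_def e'_def by Groebner_Basis.algebra
  show ?thesis
    unfolding X12 Y12 X23 Y23 L1 L2 R1 R2
    using DL DR E1 E2 by (simp add: frac_eq_eq)
qed

lemma ed_frac_aux: "(Q::'a::field) \<noteq> 0 \<Longrightarrow> (N/Q)/(M/Q) = N/M"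
  by (simp add: divide_divide_eq_left divide_divide_eq_right)

lemma ed_frac_x:
  fixes a b c d e f g h :: "'a::field"
  assumes B: "b*d*f*h \<noteq> 0" "b*d*f*h - a*c*e*g \<noteq> 0"
  shows "edx (a/b) (e/f) (c/d) (g/h) = (a*g*d*f + e*c*b*h)/(b*d*f*h - a*c*e*g)"
proof -
  have n: "(a/b)*(g/h) + (e/f)*(c/d) = (a*g*d*f + e*c*b*h)/(b*d*f*h)" using B by (simp add: field_simps)
  have m: "1 - (a/b)*(c/d)*(e/f)*(g/h) = (b*d*f*h - a*c*e*g)/(b*d*f*h)" using B by (simp add: field_simps)
  show ?thesis unfolding edx_def
    by (metis (no_types, lifting) n m ed_frac_aux[OF B(1)] mult.commute mult.assoc)
qed

lemma ed_frac_y: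
  fixes a b c d e f g h :: "'a::field"
  assumes B: "b*d*f*h \<noteq> 0" "b*d*f*h + a*c*e*g \<noteq> 0"
  shows "edy (a/b) (e/f) (c/d) (g/h) = (e*g*b*d - a*c*f*h)/(b*d*f*h + a*c*e*g)"
proof -
  have n: "(e/f)*(g/h) - (a/b)*(c/d) = (e*g*b*d - a*c*f*h)/(b*d*f*h)" using B by (simp add: field_simps)
  have m: "1 + (a/b)*(c/d)*(e/f)*(g/h) = (b*d*f*h + a*c*e*g)/(b*d*f*h)" using B by (simp add: field_simps)
  have "edy (a/b) (e/f) (c/d) (g/h) = ((e/f)*(g/h) - (a/b)*(c/d))/(1 + (a/b)*(c/d)*(e/f)*(g/h))"
    unfolding edy_def by (simp add: mult.commute mult.left_commute)
  then show ?thesis unfolding n m ed_frac_aux[OF B(1)] .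
qed

lemma ed_frac_den:
  fixes a b c d e f g h :: "'a::field"
  assumes "b*d*f*h \<noteq> 0"
  shows "1 - (a/b)*(c/d)*(e/f)*(g/h) = (b*d*f*h - a*c*e*g)/(b*d*f*h)"
    and "1 + (a/b)*(c/d)*(e/f)*(g/h) = (b*d*f*h + a*c*e*g)/(b*d*f*h)"
  using assms by (simp_all add: field_simps)

definition phi :: "'a::field \<Rightarrow> 'a \<Rightarrow> 'a ecpoint \<Rightarrow> 'a \<times> 'a" where
  "phi s k P = (case P of Infty \<Rightarrow> (0,1) | Aff x y \<Rightarrow> (k*y/(x^2+s^2), (x-s)/(x+s)))"

locale wsetup =
  fixes s k :: "'a::field"
  assumes m1: "\<not> (\<exists>z::'a. z^2 = -1)" and s0: "s \<noteq> 0" and k2: "k^2 = 2*s"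
begin

lemma two: "(2::'a) \<noteq> 0"
proof
  assume "(2::'a) = 0"
  then have "(1::'a)^2 = -1" by (simp add: eq_neg_iff_add_eq_0 one_add_one)
  then show False using m1 by blast
qed

lemma k0: "k \<noteq> 0" using k2 s0 two by auto

lemma den1: "x^2 + s^2 \<noteq> (0::'a)"
proof
  assume "x^2 + s^2 = 0"
  then have "x^2 = -(s^2)" by (simp add: eq_neg_iff_add_eq_0)
  then have "(x/s)^2 = -1" using s0 by (simp add: power_divide)
  then show False using m1 by blast
qed

lemma den2:
  assumes "y^2 = x^3 + s^2*x"
  shows "x + s \<noteq> 0"
proof
  assume "x + s = 0"
  then have "x = -s" by (simp add: eq_neg_iff_add_eq_0)
  then have "y^2 = -((k*s)^2)" using assms k2 by (simp add: power2_eq_square power3_eq_cube algebra_simps)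
  then have "(y/(k*s))^2 = -1" using s0 k0 by (simp add: power_divide)
  then show False using m1 by blast
qed

lemma phi_on:
  assumes "y^2 = x^3 + s^2*x"
  shows "(k*y/(x^2+s^2))^2 + ((x-s)/(x+s))^2 + (k*y/(x^2+s^2))^2*((x-s)/(x+s))^2 = 1"
  using den1[of x] den2[OF assms] assms k2
  apply (simp add: power_divide field_simps)
  by (simp add: algebra_simps power2_eq_square power3_eq_cube power4_eq_xxxx)

lemma close_gen:
  fixes x1 y1 x2 y2 l x3 y3 :: 'a
  assumes h1: "y1^2 = x1^3 + s^2*x1" and h2: "y2^2 = x2^3 + s^2*x2" and ne: "x1 \<noteq> x2"
    and l: "l = (y2-y1)/(x2-x1)" and x3: "x3 = l^2 - x1 - x2" and y3: "y3 = l*(x1-x3) - y1"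
  shows "y3^2 = x3^3 + s^2*x3"
proof -
  have u: "x2 - x1 \<noteq> 0" using ne by simp
  have lu: "l*(x2-x1) = y2-y1" using l u by simp
  show ?thesis using h1 h2 lu x3 y3 u by Groebner_Basis.algebra
qed

lemma close_dbl:
  fixes x1 y1 l x3 y3 :: 'a
  assumes h1: "y1^2 = x1^3 + s^2*x1" and ne: "y1 \<noteq> 0"
    and l: "l = (3*x1^2 + s^2)/(2*y1)" and x3: "x3 = l^2 - 2*x1" and y3: "y3 = l*(x1-x3) - y1"
  shows "y3^2 = x3^3 + s^2*x3"
proof -
  have u: "2*y1 \<noteq> 0" using ne two by simp
  have lu: "l*(2*y1) = 3*x1^2 + s^2" using l u by simp
  show ?thesis using h1 lu x3 y3 u by Groebner_Basis.algebra
qed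

lemma hom_core:
  fixes x1 y1 x2 y2 x3 y3 u N3 M3 :: 'a
  assumes h1: "y1^2 = x1^3 + s^2*x1" and h2: "y2^2 = x2^3 + s^2*x2" and h3: "y3^2 = x3^3 + s^2*x3"
    and u: "u \<noteq> 0" and x3: "x3 = N3/u^2" and y3: "y3 = M3/u^3"
    and EX: "k*M3*u*((x1^2+s^2)*(x2^2+s^2)*(x1+s)*(x2+s) - (k*y1)*(k*y2)*(x1-s)*(x2-s)) =
     ((k*y1)*(x2-s)*(x2^2+s^2)*(x1+s) + (x1-s)*(k*y2)*(x1^2+s^2)*(x2+s))*(N3^2+s^2*u^4)"
    and EY: "(N3 - s*u^2)*((x1^2+s^2)*(x2^2+s^2)*(x1+s)*(x2+s) + (k*y1)*(k*y2)*(x1-s)*(x2-s))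
       = ((x1-s)*(x2-s)*(x1^2+s^2)*(x2^2+s^2) - (k*y1)*(k*y2)*(x1+s)*(x2+s))*(N3 + s*u^2)"
  shows "k*y3/(x3^2+s^2) = edx (k*y1/(x1^2+s^2)) ((x1-s)/(x1+s)) (k*y2/(x2^2+s^2)) ((x2-s)/(x2+s))
       \<and> (x3-s)/(x3+s) = edy (k*y1/(x1^2+s^2)) ((x1-s)/(x1+s)) (k*y2/(x2^2+s^2)) ((x2-s)/(x2+s))"
proof -
  note D = den1[of x1] den1[of x2] den1[of x3] den2[OF h1] den2[OF h2] den2[OF h3]
  have C: "1 - (k*y1/(x1^2+s^2)) * (k*y2/(x2^2+s^2)) * ((x1-s)/(x1+s)) * ((x2-s)/(x2+s)) \<noteq> 0
      \<and> 1 + (k*y1/(x1^2+s^2)) * (k*y2/(x2^2+s^2)) * ((x1-s)/(x1+s)) * ((x2-s)/(x2+s)) \<noteq> 0"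
    by (rule ed_complete[OF m1 phi_on[OF h1] phi_on[OF h2]])
  have B: "(x1^2+s^2)*(x2^2+s^2)*(x1+s)*(x2+s) \<noteq> 0" using D by simp
  have C1: "(x1^2+s^2)*(x2^2+s^2)*(x1+s)*(x2+s) - (k*y1)*(k*y2)*(x1-s)*(x2-s) \<noteq> 0"
    using C B unfolding ed_frac_den[OF B] by simp
  have C2: "(x1^2+s^2)*(x2^2+s^2)*(x1+s)*(x2+s) + (k*y1)*(k*y2)*(x1-s)*(x2-s) \<noteq> 0"
    using C B unfolding ed_frac_den[OF B] by simp
  have Q1: "N3^2+s^2*u^4 = u^4*(x3^2+s^2)" using u unfolding x3 by (simp add: field_simps)
  have Q1': "N3^2+s^2*u^4 \<noteq> 0" unfolding Q1 using u D by simp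
  have LX0: "k*M3*u/(u^4*(x3^2+s^2)) = k*M3/(u^3*(x3^2+s^2))"
    using u D by (subst frac_eq_eq) (simp_all, Groebner_Basis.algebra)
  have LX: "k*y3/(x3^2+s^2) = (k*M3*u)/(N3^2+s^2*u^4)"
    unfolding Q1 LX0 y3 by simp
  have Q2: "N3 + s*u^2 = u^2*(x3+s)" using u unfolding x3 by (simp add: field_simps)
  have Q3: "N3 - s*u^2 = u^2*(x3-s)" using u unfolding x3 by (simp add: field_simps)
  have LY: "(x3-s)/(x3+s) = (N3 - s*u^2)/(N3 + s*u^2)"
    unfolding Q2 Q3 using u D by simp
  have Q2': "N3 + s*u^2 \<noteq> 0" unfolding Q2 using u D by simp
  have "k*y3/(x3^2+s^2) = edx (k*y1/(x1^2+s^2)) ((x1-s)/(x1+s)) (k*y2/(x2^2+s^2)) ((x2-s)/(x2+s))"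
    unfolding ed_frac_x[OF B C1] LX using C1 Q1' EX by (simp add: frac_eq_eq)
  moreover have "(x3-s)/(x3+s) = edy (k*y1/(x1^2+s^2)) ((x1-s)/(x1+s)) (k*y2/(x2^2+s^2)) ((x2-s)/(x2+s))"
    unfolding ed_frac_y[OF B C2] LY using C2 Q2' EY by (simp add: frac_eq_eq algebra_simps)
  ultimately show ?thesis by simp
qed

lemma hom_gen:
  fixes x1 y1 x2 y2 l x3 y3 :: 'a
  assumes h1: "y1^2 = x1^3 + s^2*x1" and h2: "y2^2 = x2^3 + s^2*x2" and ne: "x1 \<noteq> x2"
    and l: "l = (y2-y1)/(x2-x1)" and x3: "x3 = l^2 - x1 - x2" and y3: "y3 = l*(x1-x3) - y1"
  shows "k*y3/(x3^2+s^2) = edx (k*y1/(x1^2+s^2)) ((x1-s)/(x1+s)) (k*y2/(x2^2+s^2)) ((x2-s)/(x2+s))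
       \<and> (x3-s)/(x3+s) = edy (k*y1/(x1^2+s^2)) ((x1-s)/(x1+s)) (k*y2/(x2^2+s^2)) ((x2-s)/(x2+s))"
proof -
  have h3: "y3^2 = x3^3 + s^2*x3" by (rule close_gen[OF h1 h2 ne l x3 y3])
  define u where "u = x2 - x1"
  define N3 where "N3 = (y2-y1)^2 - (x1+x2)*u^2"
  define M3 where "M3 = (y2-y1)*(x1*u^2 - N3) - y1*u^3"
  have u: "u \<noteq> 0" using ne by (simp add: u_def)
  have x3': "x3 = N3/u^2" unfolding x3 l N3_def u_def[symmetric] using u by (simp add: field_simps)
  have y3': "y3 = M3/u^3" unfolding y3 x3' l M3_def u_def[symmetric] using u by (simp add: field_simps) Groebner_Basis.algebra
  show ?thesis
  proof (rule hom_core[OF h1 h2 h3 u x3' y3'])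
    show "k*M3*u*((x1^2+s^2)*(x2^2+s^2)*(x1+s)*(x2+s) - (k*y1)*(k*y2)*(x1-s)*(x2-s)) =
     ((k*y1)*(x2-s)*(x2^2+s^2)*(x1+s) + (x1-s)*(k*y2)*(x1^2+s^2)*(x2+s))*(N3^2+s^2*u^4)"
      using h1 h2 k2 unfolding u_def N3_def M3_def by Groebner_Basis.algebra
    show "(N3 - s*u^2)*((x1^2+s^2)*(x2^2+s^2)*(x1+s)*(x2+s) + (k*y1)*(k*y2)*(x1-s)*(x2-s))
       = ((x1-s)*(x2-s)*(x1^2+s^2)*(x2^2+s^2) - (k*y1)*(k*y2)*(x1+s)*(x2+s))*(N3 + s*u^2)"
      using h1 h2 k2 unfolding u_def N3_def M3_def by Groebner_Basis.algebra
  qed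
qed

lemma hom_dbl:
  fixes x1 y1 l x3 y3 :: 'a
  assumes h1: "y1^2 = x1^3 + s^2*x1" and ne: "y1 \<noteq> 0"
    and l: "l = (3*x1^2 + s^2)/(2*y1)" and x3: "x3 = l^2 - 2*x1" and y3: "y3 = l*(x1-x3) - y1"
  shows "k*y3/(x3^2+s^2) = edx (k*y1/(x1^2+s^2)) ((x1-s)/(x1+s)) (k*y1/(x1^2+s^2)) ((x1-s)/(x1+s))
       \<and> (x3-s)/(x3+s) = edy (k*y1/(x1^2+s^2)) ((x1-s)/(x1+s)) (k*y1/(x1^2+s^2)) ((x1-s)/(x1+s))"
proof -
  have h3: "y3^2 = x3^3 + s^2*x3" by (rule close_dbl[OF h1 ne l x3 y3])
  define u where "u = 2*y1"
  define N3 where "N3 = (3*x1^2+s^2)^2 - 2*x1*u^2"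
  define M3 where "M3 = (3*x1^2+s^2)*(x1*u^2 - N3) - y1*u^3"
  have u: "u \<noteq> 0" using ne two by (simp add: u_def)
  have x3': "x3 = N3/u^2" unfolding x3 l N3_def u_def[symmetric] using u by (simp add: field_simps)
  have y3': "y3 = M3/u^3" unfolding y3 x3' l M3_def u_def[symmetric] using u by (simp add: field_simps) Groebner_Basis.algebra
  show ?thesis
  proof (rule hom_core[OF h1 h1 h3 u x3' y3'])
    show "k*M3*u*((x1^2+s^2)*(x1^2+s^2)*(x1+s)*(x1+s) - (k*y1)*(k*y1)*(x1-s)*(x1-s)) =
     ((k*y1)*(x1-s)*(x1^2+s^2)*(x1+s) + (x1-s)*(k*y1)*(x1^2+s^2)*(x1+s))*(N3^2+s^2*u^4)"
      using h1 k2 unfolding u_def N3_def M3_def by Groebner_Basis.algebra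
    show "(N3 - s*u^2)*((x1^2+s^2)*(x1^2+s^2)*(x1+s)*(x1+s) + (k*y1)*(k*y1)*(x1-s)*(x1-s))
       = ((x1-s)*(x1-s)*(x1^2+s^2)*(x1^2+s^2) - (k*y1)*(k*y1)*(x1+s)*(x1+s))*(N3 + s*u^2)"
      using h1 k2 unfolding u_def N3_def M3_def by Groebner_Basis.algebra
  qed
qed

end

definition ed :: "'a::field \<times> 'a \<Rightarrow> 'a \<times> 'a \<Rightarrow> 'a \<times> 'a" where
  "ed p q = (edx (fst p) (snd p) (fst q) (snd q), edy (fst p) (snd p) (fst q) (snd q))"

definition EG :: "'a::field \<Rightarrow> 'a ecpoint monoid" where
  "EG A = \<lparr>carrier = curve_points A 0, mult = ec_add A, one = Infty\<rparr>"

lemma on_curve_Aff: "on_curve A 0 (Aff x y) \<longleftrightarrow> y^2 = x^3 + A*x"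
  by (simp add: on_curve_def)

context wsetup begin

lemma ecadd_gen:
  assumes "x1 \<noteq> x2"
  shows "ec_add (s^2) (Aff x1 y1) (Aff x2 y2) =
    Aff (((y2-y1)/(x2-x1))^2 - x1 - x2) (((y2-y1)/(x2-x1))*(x1 - (((y2-y1)/(x2-x1))^2 - x1 - x2)) - y1)"
  using assms by (simp add: Let_def)

lemma ecadd_dbl:
  assumes "y1 \<noteq> 0"
  shows "ec_add (s^2) (Aff x1 y1) (Aff x1 y1) =
    Aff (((3*x1^2 + s^2)/(2*y1))^2 - 2*x1) (((3*x1^2 + s^2)/(2*y1))*(x1 - (((3*x1^2 + s^2)/(2*y1))^2 - 2*x1)) - y1)"
proof -
  have "y1 \<noteq> - y1" using assms two by (metis add.inverse_neutral add_eq_0_iff2 equation_minus_iff mult_2 mult_eq_0_iff eq_neg_iff_add_eq_0)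
  then show ?thesis by (simp add: Let_def)
qed

lemma same_x:
  assumes "y1^2 = x^3 + s^2*x" "y2^2 = x^3 + s^2*x"
  shows "y2 = y1 \<or> y2 = -y1"
proof -
  have "(y2 - y1)*(y2 + y1) = 0" using assms by (simp add: algebra_simps power2_eq_square)
  then show ?thesis by (auto simp: eq_neg_iff_add_eq_0)
qed

lemma closed:
  assumes P: "on_curve (s^2) 0 P" and Q: "on_curve (s^2) 0 Q"
  shows "on_curve (s^2) 0 (ec_add (s^2) P Q)"
proof (cases P)
  case Infty then show ?thesis using Q by simp
next
  case (Aff x1 y1)
  note h1 = P[unfolded Aff on_curve_Aff]
  show ?thesis
  proof (cases Q)
    case Infty then show ?thesis using P Aff by simp
  next
    case Aff2: (Aff x2 y2)
    note h2 = Q[unfolded Aff2 on_curve_Aff]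
    show ?thesis
    proof (cases "x1 = x2")
      case False
      show ?thesis unfolding Aff Aff2 ecadd_gen[OF False] on_curve_Aff
        by (rule close_gen[OF h1 h2 False refl refl refl])
    next
      case True
      show ?thesis
      proof (cases "y2 = -y1")
        case True2: True
        then show ?thesis using True Aff Aff2 by (simp add: on_curve_def)
      next
        case False
        then have e: "y2 = y1" using same_x[of y1 x1 y2] h1 h2 True by auto
        have ne: "y1 \<noteq> 0" using False e by auto
        show ?thesis unfolding Aff Aff2 e True[symmetric] ecadd_dbl[OF ne] on_curve_Aff
          by (rule close_dbl[OF h1 ne refl refl refl])
      qed
    qed
  qed
qed

lemma phi_on_ed:
  assumes "on_curve (s^2) 0 P"
  shows "(fst (phi s k P))^2 + (snd (phi s k P))^2 + (fst (phi s k P))^2 * (snd (phi s k P))^2 = 1"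
  using assms phi_on by (cases P) (auto simp: phi_def on_curve_Aff)

lemma phi_Aff: "phi s k (Aff x y) = (k*y/(x^2+s^2), (x-s)/(x+s))"
  by (simp add: phi_def)

lemma phi_Infty: "phi s k Infty = (0,1)"
  by (simp add: phi_def)

lemma ed_pair: "ed (a,b) (c,d) = (edx a b c d, edy a b c d)"
  by (simp add: ed_def)

lemma hom:
  assumes P: "on_curve (s^2) 0 P" and Q: "on_curve (s^2) 0 Q"
  shows "phi s k (ec_add (s^2) P Q) = ed (phi s k P) (phi s k Q)"
proof (cases P)
  case Infty then show ?thesis by (cases Q) (simp_all add: ed_def edx_def edy_def phi_def)
next
  case (Aff x1 y1)
  note h1 = P[unfolded Aff on_curve_Aff]
  show ?thesis
  proof (cases Q)
    case Infty then show ?thesis using Aff by (simp add: ed_def edx_def edy_def phi_def)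
  next
    case Aff2: (Aff x2 y2)
    note h2 = Q[unfolded Aff2 on_curve_Aff]
    show ?thesis
    proof (cases "x1 = x2")
      case False
      show ?thesis unfolding Aff Aff2 ecadd_gen[OF False] phi_Aff ed_pair prod.inject
        by (rule hom_gen[OF h1 h2 False refl refl refl])
    next
      case True
      show ?thesis
      proof (cases "y2 = -y1")
        case True2: True
        define X where "X = k*y1/(x1^2+s^2)"
        define Y where "Y = (x1-s)/(x1+s)"
        have c: "X^2 + Y^2 + X^2*Y^2 = 1" unfolding X_def Y_def by (rule phi_on[OF h1])
        have c': "(-X)^2 + Y^2 + (-X)^2*Y^2 = 1" using c by simp
        have nz: "1 + X*(-X)*Y*Y \<noteq> 0" using ed_complete[OF m1 c c'] by simp
        have c2: "X^2 + Y^2 = 1 - X^2*Y^2" using c by (simp add: eq_diff_eq)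
        have eqn: "Y*Y - X*(-X) = 1 + X*(-X)*Y*Y"
        proof -
          have "Y*Y - X*(-X) = X^2 + Y^2" by (simp add: power2_eq_square)
          also have "\<dots> = 1 - X^2*Y^2" by (rule c2)
          also have "\<dots> = 1 + X*(-X)*Y*Y" by (simp add: power2_eq_square)
          finally show ?thesis .
        qed
        have e1: "edx X Y (-X) Y = 0" unfolding edx_def by simp
        have e2: "edy X Y (-X) Y = 1" unfolding edy_def eqn using nz by simp
        have mx: "k*(-y1)/(x1^2+s^2) = -X" unfolding X_def by simp
        have "ec_add (s^2) (Aff x1 y1) (Aff x1 (-y1)) = Infty" by simp
        then show ?thesis unfolding Aff Aff2 True[symmetric] True2 phi_Aff phi_Infty ed_pair mx
          X_def[symmetric] Y_def[symmetric] e1 e2 by (simp add: phi_Infty)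
      next
        case False
        then have e: "y2 = y1" using same_x[of y1 x1 y2] h1 h2 True by auto
        have ne: "y1 \<noteq> 0" using False e by auto
        show ?thesis unfolding Aff Aff2 e True[symmetric] ecadd_dbl[OF ne] phi_Aff ed_pair prod.inject
          by (rule hom_dbl[OF h1 ne refl refl refl])
      qed
    qed
  qed
qed

lemma phi_inj:
  assumes P: "on_curve (s^2) 0 P" and Q: "on_curve (s^2) 0 Q" and eq: "phi s k P = phi s k Q"
  shows "P = Q"
proof -
  have Y1: False if "x + s \<noteq> 0" "(x - s)/(x+s) = 1" for x
  proof -
    have "x - s = x + s" using that by (simp add: field_simps)
    then have "2*s = 0" by (simp add: algebra_simps mult_2)
    then show False using s0 two by simp
  qed
  show ?thesis
  proof (cases P)
    case Infty
    then show ?thesis using eq Q Y1 den2 by (cases Q) (auto simp: phi_def on_curve_Aff)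
  next
    case (Aff x1 y1)
    note h1 = P[unfolded Aff on_curve_Aff]
    show ?thesis
    proof (cases Q)
      case Infty then show ?thesis using eq Aff Y1[OF den2[OF h1]] by (auto simp: phi_def)
    next
      case Aff2: (Aff x2 y2)
      note h2 = Q[unfolded Aff2 on_curve_Aff]
      have ey: "(x1 - s)/(x1+s) = (x2-s)/(x2+s)" and ex: "k*y1/(x1^2+s^2) = k*y2/(x2^2+s^2)"
        using eq Aff Aff2 by (auto simp: phi_def)
      have "(x1 - s)*(x2+s) = (x2-s)*(x1+s)" using ey den2[OF h1] den2[OF h2] by (simp add: frac_eq_eq)
      then have "2*s*(x1 - x2) = 0" by (simp add: algebra_simps)
      then have x: "x1 = x2" using s0 two by simp
      have "y1 = y2" using ex x den1[of x2] k0 by (simp add: field_simps)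
      then show ?thesis using Aff Aff2 x by simp
    qed
  qed
qed

lemma ed_comm: "ed p q = ed q p"
  by (simp add: ed_def edx_def edy_def algebra_simps)

lemma EG_group: "comm_group (EG (s^2))"
proof (rule comm_groupI)
  fix x y assume "x \<in> carrier (EG (s^2))" "y \<in> carrier (EG (s^2))"
  then show "x \<otimes>\<^bsub>EG (s^2)\<^esub> y \<in> carrier (EG (s^2))"
    using closed by (simp add: EG_def curve_points_def)
next
  show "\<one>\<^bsub>EG (s^2)\<^esub> \<in> carrier (EG (s^2))" by (simp add: EG_def curve_points_def on_curve_def)
next
  fix x y z assume a: "x \<in> carrier (EG (s^2))" "y \<in> carrier (EG (s^2))" "z \<in> carrier (EG (s^2))"
  then have c: "on_curve (s^2) 0 x" "on_curve (s^2) 0 y" "on_curve (s^2) 0 z"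
    by (simp_all add: EG_def curve_points_def)
  have "phi s k (ec_add (s^2) (ec_add (s^2) x y) z) = phi s k (ec_add (s^2) x (ec_add (s^2) y z))"
    using ed_assoc[OF m1 phi_on_ed[OF c(1)] phi_on_ed[OF c(2)] phi_on_ed[OF c(3)]]
    by (simp add: hom closed c ed_def)
  then show "x \<otimes>\<^bsub>EG (s^2)\<^esub> y \<otimes>\<^bsub>EG (s^2)\<^esub> z = x \<otimes>\<^bsub>EG (s^2)\<^esub> (y \<otimes>\<^bsub>EG (s^2)\<^esub> z)"
    using phi_inj closed c by (simp add: EG_def)
next
  fix x y assume "x \<in> carrier (EG (s^2))" "y \<in> carrier (EG (s^2))"
  then have c: "on_curve (s^2) 0 x" "on_curve (s^2) 0 y"
    by (simp_all add: EG_def curve_points_def)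
  have "phi s k (ec_add (s^2) x y) = phi s k (ec_add (s^2) y x)"
    by (simp add: hom c ed_comm[of "phi s k x"])
  then show "x \<otimes>\<^bsub>EG (s^2)\<^esub> y = y \<otimes>\<^bsub>EG (s^2)\<^esub> x"
    using phi_inj closed c by (simp add: EG_def)
next
  fix x assume "x \<in> carrier (EG (s^2))"
  then show "\<one>\<^bsub>EG (s^2)\<^esub> \<otimes>\<^bsub>EG (s^2)\<^esub> x = x" by (simp add: EG_def)
next
  fix x assume a: "x \<in> carrier (EG (s^2))"
  show "\<exists>y\<in>carrier (EG (s^2)). y \<otimes>\<^bsub>EG (s^2)\<^esub> x = \<one>\<^bsub>EG (s^2)\<^esub>"
  proof (cases x)
    case Infty then show ?thesis using a by (intro bexI[of _ Infty]) (auto simp: EG_def)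
  next
    case (Aff x1 y1)
    then have "Aff x1 (-y1) \<in> carrier (EG (s^2))" using a by (simp add: EG_def curve_points_def on_curve_def)
    moreover have "ec_add (s^2) (Aff x1 (-y1)) x = Infty" using Aff by simp
    ultimately show ?thesis by (auto simp: EG_def)
  qed
qed

end

lemma char_p: "of_nat CARD('a::{finite,field}) = (0::'a)"
proof -
  have "(\<Sum>y\<in>UNIV. y + 1) = (\<Sum>y\<in>UNIV. (y::'a))"
    by (rule sum.reindex_bij_witness[of _ "\<lambda>y. y - 1" "\<lambda>y. y + 1"]) auto
  then have "(\<Sum>y\<in>UNIV. y) + of_nat CARD('a) = (\<Sum>y\<in>UNIV. (y::'a))"
    by (simp add: sum.distrib)
  then show ?thesis by simp
qed

lemma fermat:
  fixes x :: "'a::{finite,field}"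
  assumes x: "x \<noteq> 0"
  shows "x^(CARD('a) - 1) = 1"
proof -
  let ?U = "UNIV - {0::'a}"
  have "(\<Prod>y\<in>?U. x*y) = (\<Prod>y\<in>?U. y)"
    by (rule prod.reindex_bij_witness[of _ "\<lambda>y. y/x" "\<lambda>y. x*y"]) (use x in auto)
  then have "x^card ?U * (\<Prod>y\<in>?U. y) = (\<Prod>y\<in>?U. y)"
    by (simp add: prod.distrib)
  moreover have "(\<Prod>y\<in>?U. y) \<noteq> 0" by simp
  ultimately have "x^card ?U = 1" by simp
  moreover have "card ?U = CARD('a) - 1" by (simp add: card_Diff_singleton)
  ultimately show ?thesis by simp
qed

lemma two_ne:
  assumes "CARD('a::{finite,field}) = 4*j + 3"
  shows "(2::'a) \<noteq> 0"
proof
  assume h: "(2::'a) = 0"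
  have "of_nat (4*j+3) = (0::'a)" using char_p[where 'a='a] assms by simp
  moreover have "(of_nat (4*j+3)::'a) = 2*(2*of_nat j + 1) + 1" by (simp add: algebra_simps)
  ultimately show False using h by simp
qed

lemma neg1_nonsq:
  assumes c: "CARD('a::{finite,field}) = 4*j + 3"
  shows "\<not> (\<exists>z::'a. z^2 = -1)"
proof
  assume "\<exists>z::'a. z^2 = -1"
  then obtain z :: 'a where z: "z^2 = -1" by blast
  then have "z \<noteq> 0" by auto
  then have "z^(4*j+2) = 1" using fermat[of z] c by simp
  moreover have "z^(4*j+2) = (z^2)^(2*j+1)"
  proof -
    have "(z^2)^(2*j+1) = z^(2*(2*j+1))" by (rule power_mult[symmetric])
    moreover have "2*(2*j+1) = 4*j+(2::nat)" by simp
    ultimately show ?thesis by simp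
  qed
  ultimately have "(-1::'a)^(2*j+1) = 1" using z by simp
  then have "(-1::'a) = 1" by simp
  then have "(2::'a) = 0" by (metis add_eq_0_iff2 one_add_one)
  then show False using two_ne[OF c] by simp
qed

lemma NS:
  fixes c :: "'a::{finite,field}"
  assumes m1: "\<not> (\<exists>z::'a. z^2 = -1)" and c: "c \<noteq> 0"
  shows "(\<exists>z. z^2 = c) \<or> (\<exists>z. z^2 = -c)"
proof -
  let ?U = "UNIV - {0::'a}"
  let ?Sq = "(\<lambda>z. z^2) ` ?U"
  let ?NSq = "uminus ` ?Sq"
  have sub1: "?Sq \<subseteq> ?U" by auto
  have sub2: "?NSq \<subseteq> ?U" by auto
  have disj: "?Sq \<inter> ?NSq = {}"
  proof (rule ccontr)
    assume "?Sq \<inter> ?NSq \<noteq> {}"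
    then obtain z w :: 'a where zw: "z \<noteq> 0" "w \<noteq> 0" "z^2 = -(w^2)" by auto
    then have "(z/w)^2 = -1" by (simp add: power_divide)
    then show False using m1 by blast
  qed
  have fib: "card {z. z^2 = q} \<le> 2" if "q \<in> ?Sq" for q
  proof -
    obtain w where w: "q = w^2" using \<open>q \<in> ?Sq\<close> by auto
    have "{z. z^2 = q} \<subseteq> {w, -w}"
    proof
      fix z assume "z \<in> {z. z^2 = q}"
      then have "(z - w)*(z + w) = 0" using w by (simp add: algebra_simps power2_eq_square)
      then show "z \<in> {w, -w}" by (auto simp: eq_neg_iff_add_eq_0)
    qed
    then have "card {z. z^2 = q} \<le> card {w, -w}" by (rule card_mono[rotated]) simp
    also have "\<dots> \<le> 2" by (simp add: card_insert_if)
    finally show ?thesis .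
  qed
  have "?U \<subseteq> (\<Union>q\<in>?Sq. {z. z^2 = q})" by auto
  then have "card ?U \<le> card (\<Union>q\<in>?Sq. {z. z^2 = q})" by (rule card_mono[rotated]) simp
  also have "\<dots> \<le> (\<Sum>q\<in>?Sq. card {z. z^2 = q})" by (rule card_UN_le) simp
  also have "\<dots> \<le> (\<Sum>q\<in>?Sq. 2)" by (rule sum_mono) (rule fib)
  also have "\<dots> = 2 * card ?Sq" by simp
  finally have le: "card ?U \<le> 2 * card ?Sq" .
  have "card ?NSq = card ?Sq" by (rule card_image) (simp add: inj_on_def)
  then have "card (?Sq \<union> ?NSq) = 2 * card ?Sq" using disj by (simp add: card_Un_disjoint)
  then have "card ?U \<le> card (?Sq \<union> ?NSq)" using le by simp
  then have "?Sq \<union> ?NSq = ?U" using sub1 sub2 by (intro card_seteq) auto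
  then have "c \<in> ?Sq \<union> ?NSq" using c by auto
  then show ?thesis by (auto simp: minus_equation_iff[of c])
qed

lemma sqcount:
  fixes c :: "'a::{finite,field}"
  assumes m1: "\<not> (\<exists>z::'a. z^2 = -1)" and two: "(2::'a) \<noteq> 0"
  shows "card {y. y^2 = c} + card {y. y^2 = -c} = 2"
proof -
  have aux: "card {y. y^2 = w^2} = 2 \<and> card {y::'a. y^2 = -(w^2)} = 0" if w: "w \<noteq> 0" for w :: 'a
  proof
    have "{y. y^2 = w^2} = {w, -w}"
    proof
      show "{y. y^2 = w^2} \<subseteq> {w, -w}"
      proof
        fix z assume "z \<in> {y. y^2 = w^2}"
        then have "(z - w)*(z + w) = 0" by (simp add: algebra_simps power2_eq_square)
        then show "z \<in> {w, -w}" by (auto simp: eq_neg_iff_add_eq_0)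
      qed
    qed auto
    moreover have "w \<noteq> -w" using w two by (metis add_eq_0_iff2 mult_2 mult_eq_0_iff eq_neg_iff_add_eq_0)
    ultimately show "card {y. y^2 = w^2} = 2" by simp
    have "{y::'a. y^2 = -(w^2)} = {}"
    proof (rule ccontr)
      assume "{y::'a. y^2 = -(w^2)} \<noteq> {}"
      then obtain y :: 'a where "y^2 = -(w^2)" by auto
      then have "(y/w)^2 = -1" using w by (simp add: power_divide)
      then show False using m1 by blast
    qed
    then show "card {y::'a. y^2 = -(w^2)} = 0" by simp
  qed
  show ?thesis
  proof (cases "c = 0")
    case True
    have "{y::'a. y^2 = 0} = {0}" by auto
    then show ?thesis using True by simp
  next
    case False
    from NS[OF m1 False] show ?thesis
    proof
      assume "\<exists>z. z^2 = c"
      then obtain w where w: "w^2 = c" by blast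
      then have "w \<noteq> 0" using False by auto
      then show ?thesis using aux w by auto
    next
      assume "\<exists>z. z^2 = -c"
      then obtain w where w: "w^2 = -c" by blast
      then have "w \<noteq> 0" using False by auto
      moreover have "c = -(w^2)" using w by simp
      ultimately show ?thesis using aux[of w] w by simp
    qed
  qed
qed

lemma count_points:
  fixes A :: "'a::{finite,field}"
  assumes m1: "\<not> (\<exists>z::'a. z^2 = -1)" and two: "(2::'a) \<noteq> 0"
  shows "card (curve_points A 0) = CARD('a) + 1"
proof -
  define f where "f x = x^3 + A*x" for x :: 'a
  define N where "N c = card {y::'a. y^2 = c}" for c
  have fneg: "f (-x) = - f x" for x by (simp add: f_def)
  have "(\<Sum>x\<in>UNIV. N (f x)) = (\<Sum>x\<in>UNIV. N (f (-x)))"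
    by (rule sum.reindex_bij_witness[of _ uminus uminus]) auto
  then have "2 * (\<Sum>x\<in>UNIV. N (f x)) = (\<Sum>x\<in>UNIV. N (f x) + N (- f x))"
    by (simp add: sum.distrib fneg)
  also have "\<dots> = (\<Sum>x\<in>(UNIV::'a set). 2)" using sqcount[OF m1 two] by (simp add: N_def)
  finally have S: "(\<Sum>x\<in>UNIV. N (f x)) = CARD('a)" by simp
  have cp: "curve_points A 0 = insert Infty ((\<lambda>(x,y). Aff x y) ` (SIGMA x:UNIV. {y. y^2 = f x}))"
  proof -
    { fix P assume "P \<in> curve_points A 0"
      then have "P \<in> insert Infty ((\<lambda>(x,y). Aff x y) ` (SIGMA x:UNIV. {y. y^2 = f x}))"
        by (cases P) (auto simp: curve_points_def on_curve_def f_def) }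
    moreover
    { fix P assume "P \<in> insert Infty ((\<lambda>(x,y). Aff x y) ` (SIGMA x:UNIV. {y. y^2 = f x}))"
      then have "P \<in> curve_points A 0"
        by (auto simp: curve_points_def on_curve_def f_def) }
    ultimately show ?thesis by blast
  qed
  have inj: "inj_on (\<lambda>(x,y). Aff x y) (SIGMA x:UNIV. {y::'a. y^2 = f x})"
    by (auto simp: inj_on_def)
  have "card ((\<lambda>(x,y). Aff x y) ` (SIGMA x:UNIV. {y. y^2 = f x})) = CARD('a)"
    using S by (simp add: card_image[OF inj] N_def)
  moreover have "Infty \<notin> (\<lambda>(x,y). Aff x y) ` (SIGMA x:UNIV. {y. y^2 = f x})" by auto
  moreover have "finite ((\<lambda>(x,y). Aff x y) ` (SIGMA x:UNIV. {y::'a. y^2 = f x}))" by simp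
  ultimately show ?thesis unfolding cp by simp
qed

lemma (in monoid) pow_mod:
  assumes x: "x \<in> carrier G" and N: "x [^] (N::nat) = \<one>"
  shows "x [^] (a::nat) = x [^] (a mod N)"
proof -
  have e: "N * (a div N) + a mod N = a" by simp
  have "x [^] a = x [^] (N * (a div N) + a mod N)" by (simp only: e)
  also have "\<dots> = x [^] (N * (a div N)) \<otimes> x [^] (a mod N)"
    using x by (simp only: nat_pow_mult)
  also have "\<dots> = (x [^] N) [^] (a div N) \<otimes> x [^] (a mod N)"
    using x by (simp only: nat_pow_pow)
  also have "\<dots> = x [^] (a mod N)" using x N by simp
  finally show ?thesis .
qed

lemma (in monoid) pow_two: "x \<in> carrier G \<Longrightarrow> x [^] (2::nat) = x \<otimes> x"
  by (simp add: numeral_2_eq_2)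

lemma (in comm_group) two_power_in_cyclic:
  assumes Q: "Q \<in> carrier G" and Qn: "Q [^] ((2::nat)^n) = \<one>"
    and nsq: "\<forall>R\<in>carrier G. R \<otimes> R \<noteq> Q"
    and inv2: "\<forall>R\<in>carrier G. R \<otimes> R = \<one> \<longrightarrow> R = \<one> \<or> R = T"
  shows "R \<in> carrier G \<Longrightarrow> R [^] ((2::nat)^e) = \<one> \<Longrightarrow> \<exists>j::nat. R = Q [^] j"
proof -
  have Q1: "Q \<noteq> \<one>" using nsq one_closed by force
  have ex: "\<exists>j. Q [^] ((2::nat)^j) = \<one>" using Qn by blast
  define j where "j = (LEAST j. Q [^] ((2::nat)^j) = \<one>)"
  have jQ: "Q [^] ((2::nat)^j) = \<one>" unfolding j_def by (rule LeastI_ex[OF ex])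
  have j0: "j \<noteq> 0"
  proof
    assume "j = 0"
    then have "Q [^] (1::nat) = \<one>" using jQ by simp
    then show False using Q1 Q by simp
  qed
  then obtain i where i: "j = Suc i" by (cases j) auto
  have Vne: "Q [^] ((2::nat)^i) \<noteq> \<one>"
  proof
    assume "Q [^] ((2::nat)^i) = \<one>"
    then have "j \<le> i" unfolding j_def by (rule Least_le)
    then show False using i by simp
  qed
  have "Q [^] ((2::nat)^i) \<otimes> Q [^] ((2::nat)^i) = \<one>"
    using jQ i Q by (simp add: nat_pow_mult mult_2[symmetric])
  then have TQ: "T = Q [^] ((2::nat)^i)" using inv2 Vne Q by auto
  show "R \<in> carrier G \<Longrightarrow> R [^] ((2::nat)^e) = \<one> \<Longrightarrow> \<exists>j::nat. R = Q [^] j"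
  proof (induction e arbitrary: R)
    case 0
    then have "R = \<one>" by simp
    then show ?case by (intro exI[of _ 0]) simp
  next
    case (Suc e)
    have RR: "R \<otimes> R \<in> carrier G" using Suc.prems by simp
    have "(R \<otimes> R) [^] ((2::nat)^e) = R [^] ((2::nat)^Suc e)"
      using Suc.prems by (simp add: pow_two[symmetric] nat_pow_pow)
    then have "\<exists>c::nat. R \<otimes> R = Q [^] c" using Suc.IH[OF RR] Suc.prems by simp
    then obtain c :: nat where c: "R \<otimes> R = Q [^] c" by blast
    show ?case
    proof (cases "even c")
      case False
      have cop: "coprime c ((2::nat)^n)" using False by simp
      have "c \<noteq> 0" using False by (metis even_zero)
      then obtain x y where xy: "c * x = (2::nat)^n * y + gcd c (2^n)" using bezout_nat by blast
      then have xy: "c * x = (2::nat)^n * y + 1" using cop by simp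
      have "(R [^] x) \<otimes> (R [^] x) = (R \<otimes> R) [^] x"
        using Suc.prems by (simp add: pow_two[symmetric] nat_pow_pow mult.commute)
      also have "\<dots> = Q [^] (c * x)" using c Q by (simp add: nat_pow_pow)
      also have "\<dots> = Q [^] ((c*x) mod (2::nat)^n)" using pow_mod[OF Q Qn] by blast
      also have "\<dots> = Q [^] ((1::nat) mod 2^n)"
      proof -
        have m: "(c*x) mod (2::nat)^n = (1::nat) mod 2^n" unfolding xy
          by (metis mod_mult_self3 add.commute mult.commute)
        show ?thesis by (simp only: m)
      qed
      also have "\<dots> = Q" using pow_mod[OF Q Qn, of 1] Q by simp
      finally show ?thesis using nsq Suc.prems by auto
    next
      case True
      then obtain d where d: "c = 2*d" by blast
      define V where "V = Q [^] d"
      have V: "V \<in> carrier G" using Q by (simp add: V_def)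
      have RV: "R \<otimes> R = V \<otimes> V" using c Q by (simp add: d V_def nat_pow_mult mult_2)
      define R' where "R' = R \<otimes> inv V"
      have R': "R' \<in> carrier G" using V Suc.prems by (simp add: R'_def)
      have "R' \<otimes> R' = (R \<otimes> R) \<otimes> (inv V \<otimes> inv V)"
        using V Suc.prems by (simp add: R'_def m_ac)
      also have "\<dots> = (V \<otimes> inv V) \<otimes> (V \<otimes> inv V)"
        using V by (simp add: RV m_ac)
      also have "\<dots> = \<one>" using V by simp
      finally have or: "R' = \<one> \<or> R' = T" using inv2 R' by auto
      have RR': "R = R' \<otimes> V" using V Suc.prems by (simp add: R'_def m_assoc)
      from or show ?thesis
      proof
        assume "R' = \<one>"
        then show ?thesis using V RR' by (auto simp: V_def)
      next
        assume "R' = T"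
        with RR' have "R = T \<otimes> V" by simp
        then have "R = Q [^] ((2::nat)^i + d)" using Q by (simp add: TQ V_def nat_pow_mult)
        then show ?thesis by blast
      qed
    qed
  qed
qed

context wsetup begin

lemma smult_pow:
  assumes "P \<in> carrier (EG (s^2))"
  shows "ec_smult (s^2) j P = P [^]\<^bsub>EG (s^2)\<^esub> j"
proof (induction j)
  case 0 then show ?case by (simp add: EG_def)
next
  case (Suc j)
  interpret comm_group "EG (s^2)" by (rule EG_group)
  have "P [^]\<^bsub>EG (s^2)\<^esub> Suc j = P \<otimes>\<^bsub>EG (s^2)\<^esub> P [^]\<^bsub>EG (s^2)\<^esub> j"
    using assms by (rule nat_pow_Suc2)
  then show ?case using Suc by (simp add: EG_def)
qed

lemma not_double:
  assumes V: "on_curve (s^2) 0 V"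
  shows "ec_add (s^2) V V \<noteq> Aff (-1) y"
proof (cases V)
  case Infty then show ?thesis by simp
next
  case (Aff x1 y1)
  note h1 = V[unfolded Aff on_curve_Aff]
  show ?thesis
  proof (cases "y1 = 0")
    case True then show ?thesis using Aff by simp
  next
    case False
    have u: "2*y1 \<noteq> 0" using False two by simp
    have u2: "(2*y1)^2 \<noteq> 0" by (rule power_not_zero[OF u])
    have yy: "(2*y1)^2 = 4*(x1^3 + s^2*x1)" using h1 by (simp add: power_mult_distrib)
    have e2: "(3*x1^2 + s^2)^2 - 2*x1*(2*y1)^2 = (x1^2 - s^2)^2"
      unfolding yy by (simp add: algebra_simps power2_eq_square power3_eq_cube power4_eq_xxxx)
    have "((3*x1^2 + s^2)/(2*y1))^2 - 2*x1 = ((3*x1^2 + s^2)^2 - 2*x1*(2*y1)^2)/(2*y1)^2"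
      by (simp only: power_divide divide_diff_eq_iff[OF u2])
    also have "\<dots> = ((x1^2 - s^2)/(2*y1))^2" by (simp only: e2 power_divide)
    finally have "((3*x1^2 + s^2)/(2*y1))^2 - 2*x1 = ((x1^2 - s^2)/(2*y1))^2" .
    moreover have "((x1^2 - s^2)/(2*y1))^2 \<noteq> -1" using m1 by blast
    ultimately show ?thesis unfolding Aff ecadd_dbl[OF False] by simp
  qed
qed

lemma involution:
  assumes R: "on_curve (s^2) 0 R" and RR: "ec_add (s^2) R R = Infty"
  shows "R = Infty \<or> R = Aff 0 0"
proof (cases R)
  case Infty then show ?thesis by simp
next
  case (Aff x1 y1)
  note h1 = R[unfolded Aff on_curve_Aff]
  have "y1 = - y1"
  proof (rule ccontr)
    assume "y1 \<noteq> -y1"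
    then have "y1 \<noteq> 0" by auto
    then show False using RR Aff ecadd_dbl by simp
  qed
  then have y: "y1 = 0" using two by (metis add_eq_0_iff2 mult_2 mult_eq_0_iff eq_neg_iff_add_eq_0)
  then have "x1 * (x1^2 + s^2) = 0" using h1 by (simp add: algebra_simps power2_eq_square power3_eq_cube)
  then have "x1 = 0" using den1[of x1] by simp
  then show ?thesis using Aff y by simp
qed

end

theorem corollary1:
  fixes m n :: nat and t :: "'a::{finite,field}"
  assumes "odd m" and "m \<ge> 1" and "n > 1"
    and "prime (m * 2^n - 1)"
    and "CARD('a) = m * 2^n - 1"
    and "\<not> (\<exists>s::'a. s^2 = t^2 + 1)"
  shows "ec_cyclic (-(t^2 + 1)) (ec_smult (-(t^2 + 1)) m (Aff (-1) t))
           = two_sylow (-(t^2 + 1)) 0"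
proof -
  define j where "j = m * 2^(n-2) - 1"
  have pn: "(2::nat)^n = 4 * 2^(n-2)"
  proof -
    have nq: "n = (n-2) + 2" using assms(3) by simp
    have "(2::nat)^n = 2^((n-2) + 2)" by (subst nq) (rule refl)
    also have "\<dots> = 4 * 2^(n-2)" by (simp only: power_add) simp
    finally show ?thesis .
  qed
  have mpos: "m * 2^(n-2) \<ge> 1" using assms(2) by simp
  have card: "CARD('a) = 4*j + 3"
  proof -
    define M where "M = m * 2^(n-2)"
    have M1: "M \<ge> 1" using mpos by (simp add: M_def)
    have "CARD('a) = 4*M - 1" using assms(5) pn by (simp add: M_def mult.left_commute)
    moreover have "j = M - 1" by (simp add: j_def M_def)
    ultimately show ?thesis using M1 by simp
  qed
  have m1: "\<not> (\<exists>z::'a. z^2 = -1)" by (rule neg1_nonsq[OF card])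
  have two: "(2::'a) \<noteq> 0" by (rule two_ne[OF card])
  have t0: "t^2 + 1 \<noteq> 0" using assms(6) by (metis power_zero_numeral)
  obtain s0 where s0: "s0^2 = -(t^2+1)" using NS[OF m1 t0] assms(6) by blast
  have s00: "s0 \<noteq> 0"
  proof
    assume "s0 = 0"
    then have "-(t^2+1) = 0" using s0 by simp
    then have "t^2+1 = 0" by (simp only: neg_equal_0_iff_equal)
    then show False using t0 by simp
  qed
  have "2*s0 \<noteq> 0" using s00 two by simp
  then have "(\<exists>z. z^2 = 2*s0) \<or> (\<exists>z. z^2 = -(2*s0))" by (rule NS[OF m1])
  then obtain s k :: 'a where s: "s^2 = -(t^2+1)" and k: "k^2 = 2*s" and sne: "s \<noteq> 0"
  proof
    assume "\<exists>z. z^2 = 2*s0"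
    then obtain z where "z^2 = 2*s0" by blast
    then show thesis using that[of s0 z] s0 s00 by simp
  next
    assume "\<exists>z. z^2 = -(2*s0)"
    then obtain z where "z^2 = -(2*s0)" by blast
    then show thesis using that[of "-s0" z] s0 s00 by simp
  qed
  interpret W: wsetup s k using m1 sne k by unfold_locales
  interpret G: comm_group "EG (s^2)" by (rule W.EG_group)
  have eqA: "-(t^2+1) = s^2" using s by simp
  let ?G = "EG (s^2)"
  define P where "P = Aff (-1) t"
  have Pc: "P \<in> carrier ?G"
    unfolding P_def EG_def curve_points_def using s by (simp add: on_curve_def)
  have ordG: "order ?G = m * 2^n"
  proof -
    have "order ?G = card (curve_points (s^2) 0)" by (simp add: order_def EG_def)
    also have "\<dots> = CARD('a) + 1" by (rule count_points[OF m1 two])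
    also have "\<dots> = m * 2^n" using assms(5) assms(2) by simp
    finally show ?thesis .
  qed
  define Q where "Q = P [^]\<^bsub>?G\<^esub> m"
  have Qc: "Q \<in> carrier ?G" using Pc by (simp add: Q_def)
  have Qn: "Q [^]\<^bsub>?G\<^esub> ((2::nat)^n) = \<one>\<^bsub>?G\<^esub>"
    using G.pow_order_eq_1[OF Pc] Pc by (simp add: Q_def G.nat_pow_pow ordG)
  have nsq: "\<forall>R\<in>carrier ?G. R \<otimes>\<^bsub>?G\<^esub> R \<noteq> Q"
  proof (intro ballI notI)
    fix R assume R: "R \<in> carrier ?G" and RQ: "R \<otimes>\<^bsub>?G\<^esub> R = Q"
    obtain i where i: "m = 2*i + 1" using assms(1) oddE by blast
    define V where "V = R \<otimes>\<^bsub>?G\<^esub> inv\<^bsub>?G\<^esub> (P [^]\<^bsub>?G\<^esub> i)"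
    have Vc: "V \<in> carrier ?G" using R Pc by (simp add: V_def)
    have PP: "Q = (P [^]\<^bsub>?G\<^esub> i \<otimes>\<^bsub>?G\<^esub> P [^]\<^bsub>?G\<^esub> i) \<otimes>\<^bsub>?G\<^esub> P"
      using Pc by (simp add: Q_def i G.nat_pow_mult mult_2)
    have "V \<otimes>\<^bsub>?G\<^esub> V = (R \<otimes>\<^bsub>?G\<^esub> R) \<otimes>\<^bsub>?G\<^esub> (inv\<^bsub>?G\<^esub> (P [^]\<^bsub>?G\<^esub> i) \<otimes>\<^bsub>?G\<^esub> inv\<^bsub>?G\<^esub> (P [^]\<^bsub>?G\<^esub> i))"
      using R Pc by (simp add: V_def G.m_ac)
    also have "\<dots> = P"
      using Pc unfolding RQ PP by (simp add: G.m_ac)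
    finally have "ec_add (s^2) V V = Aff (-1) t" by (simp add: EG_def P_def)
    moreover have "on_curve (s^2) 0 V" using Vc by (simp add: EG_def curve_points_def)
    ultimately show False using W.not_double by blast
  qed
  have inv2: "\<forall>R\<in>carrier ?G. R \<otimes>\<^bsub>?G\<^esub> R = \<one>\<^bsub>?G\<^esub> \<longrightarrow> R = \<one>\<^bsub>?G\<^esub> \<or> R = Aff 0 0"
    using W.involution by (auto simp: EG_def curve_points_def)
  have QQ: "ec_smult (s^2) m P = Q" unfolding Q_def by (rule W.smult_pow[OF Pc])
  have "ec_cyclic (s^2) Q = two_sylow (s^2) 0"
  proof
    show "ec_cyclic (s^2) Q \<subseteq> two_sylow (s^2) 0"
    proof
      fix R assume "R \<in> ec_cyclic (s^2) Q"
      then obtain l where l: "R = ec_smult (s^2) l Q" by (auto simp: ec_cyclic_def)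
      then have Rl: "R = Q [^]\<^bsub>?G\<^esub> l" using W.smult_pow[OF Qc] by simp
      have Rc: "R \<in> carrier ?G" using Qc Rl by simp
      have "R [^]\<^bsub>?G\<^esub> ((2::nat)^n) = \<one>\<^bsub>?G\<^esub>"
        using Qc Qn by (simp add: Rl G.nat_pow_pow mult.commute[of l] G.nat_pow_pow[symmetric])
      then have "ec_smult (s^2) (2^n) R = Infty" using W.smult_pow[OF Rc] by (simp add: EG_def)
      then show "R \<in> two_sylow (s^2) 0" using Rc by (auto simp: two_sylow_def EG_def)
    qed
  next
    show "two_sylow (s^2) 0 \<subseteq> ec_cyclic (s^2) Q"
    proof
      fix R assume "R \<in> two_sylow (s^2) 0"
      then obtain e where Rc: "R \<in> carrier ?G" and e: "ec_smult (s^2) (2^e) R = Infty"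
        by (auto simp: two_sylow_def EG_def)
      have "R [^]\<^bsub>?G\<^esub> ((2::nat)^e) = \<one>\<^bsub>?G\<^esub>" using e W.smult_pow[OF Rc] by (simp add: EG_def)
      then obtain l :: nat where "R = Q [^]\<^bsub>?G\<^esub> l"
        using G.two_power_in_cyclic[OF Qc Qn nsq inv2 Rc] by blast
      then have "R = ec_smult (s^2) l Q" using W.smult_pow[OF Qc] by simp
      then show "R \<in> ec_cyclic (s^2) Q" by (auto simp: ec_cyclic_def)
    qed
  qed
  then show ?thesis unfolding eqA P_def[symmetric] QQ .
qed

end
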